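(* Let $(q_n),(r_n)$ be complex sequences vanishing faster than any negative power of $|n|$ as $n\to\pm\infty$ with $1-q_nr_n\neq0$ and $1+q_nr_{n+1}\neq0$ for all $n\in\mathbb Z$. Set $D_n=\prod_{j=-\infty}^n(1-q_jr_j)$, $E_n=\prod_{j=-\infty}^n(1+q_jr_{j+1})$, $D_\infty=\prod_{j\in\mathbb Z}(1-q_jr_j)$, $E_\infty=\prod_{j\in\mathbb Z}(1+q_jr_{j+1})$, and define $$u_n=q_n\frac{E_{n-1}}{D_n},\quad v_n=(-r_n+r_{n+1}-q_nr_nr_{n+1})\frac{D_{n-1}}{E_n},\quad p_n=(q_n-q_{n+1}-q_nq_{n+1}r_{n+1})\frac{E_{n-1}}{D_{n+1}},\quad s_n=r_{n+1}\frac{D_n}{E_n}.$$ Then $$1-u_nv_n=\frac1{(1-q_nr_n)(1+q_nr_{n+1})},\qquad 1-p_ns_n=\frac1{(1-q_{n+1}r_{n+1})(1+q_nr_{n+1})},$$ and, with $D_n^{(u,v)}=\prod_{j\le n}(1-u_jv_j)$, $D_\infty^{(u,v)}=\prod_{j\in\mathbb Z}(1-u_jv_j)$, $D_n^{(p,s)}=\prod_{j\le n}(1-p_js_j)$, $D_\infty^{(p,s)}=\prod_{j\in\mathbb Z}(1-p_js_j)$, $$D_n^{(u,v)}=\frac1{D_nE_n},\quad D_\infty^{(u,v)}=\frac1{D_\infty E_\infty},\quad D_n^{(p,s)}=\frac1{D_{n+1}E_n},\quad D_\infty^{(p,s)}=\frac1{D_\infty E_\infty}.$$ *)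

theory Defs
  imports "HOL-Analysis.Analysis"
begin

definition rapid_decay :: "(int \<Rightarrow> complex) \<Rightarrow> bool" where
  "rapid_decay a \<longleftrightarrow>
     (\<forall>k::nat. ((\<lambda>n. real_of_int \<bar>n\<bar> ^ k * norm (a n)) \<longlongrightarrow> 0) at_top \<and>
               ((\<lambda>n. real_of_int \<bar>n\<bar> ^ k * norm (a n)) \<longlongrightarrow> 0) at_bot)"

definition lprod :: "(int \<Rightarrow> complex) \<Rightarrow> int \<Rightarrow> complex" where
  "lprod f n = (\<Prod>k. f (n - int k))"

definition zprod :: "(int \<Rightarrow> complex) \<Rightarrow> complex" where
  "zprod f = lim (\<lambda>m::nat. \<Prod>j\<in>{- int m..int m}. f j)"

definition Dseq :: "(int \<Rightarrow> complex) \<Rightarrow> (int \<Rightarrow> complex) \<Rightarrow> int \<Rightarrow> complex" where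
  "Dseq q r = lprod (\<lambda>j. 1 - q j * r j)"

definition Eseq :: "(int \<Rightarrow> complex) \<Rightarrow> (int \<Rightarrow> complex) \<Rightarrow> int \<Rightarrow> complex" where
  "Eseq q r = lprod (\<lambda>j. 1 + q j * r (j + 1))"

definition Dinf :: "(int \<Rightarrow> complex) \<Rightarrow> (int \<Rightarrow> complex) \<Rightarrow> complex" where
  "Dinf q r = zprod (\<lambda>j. 1 - q j * r j)"

definition Einf :: "(int \<Rightarrow> complex) \<Rightarrow> (int \<Rightarrow> complex) \<Rightarrow> complex" where
  "Einf q r = zprod (\<lambda>j. 1 + q j * r (j + 1))"

definition useq :: "(int \<Rightarrow> complex) \<Rightarrow> (int \<Rightarrow> complex) \<Rightarrow> int \<Rightarrow> complex" where
  "useq q r n = q n * Eseq q r (n - 1) / Dseq q r n"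

definition vseq :: "(int \<Rightarrow> complex) \<Rightarrow> (int \<Rightarrow> complex) \<Rightarrow> int \<Rightarrow> complex" where
  "vseq q r n = (- r n + r (n + 1) - q n * r n * r (n + 1)) * Dseq q r (n - 1) / Eseq q r n"

definition pseq :: "(int \<Rightarrow> complex) \<Rightarrow> (int \<Rightarrow> complex) \<Rightarrow> int \<Rightarrow> complex" where
  "pseq q r n = (q n - q (n + 1) - q n * q (n + 1) * r (n + 1)) * Eseq q r (n - 1) / Dseq q r (n + 1)"

definition sseq :: "(int \<Rightarrow> complex) \<Rightarrow> (int \<Rightarrow> complex) \<Rightarrow> int \<Rightarrow> complex" where
  "sseq q r n = r (n + 1) * Dseq q r n / Eseq q r n"

end

theory Submission
  imports Defs
begin

lemma decay_gen:
  fixes a :: "int \<Rightarrow> complex" and h :: "nat \<Rightarrow> int"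
  assumes t2: "((\<lambda>n. real_of_int \<bar>n\<bar> ^ 2 * norm (a n)) \<longlongrightarrow> 0) F"
    and t0: "((\<lambda>n. real_of_int \<bar>n\<bar> ^ 0 * norm (a n)) \<longlongrightarrow> 0) F"
    and hF: "filterlim h F sequentially"
    and hb: "\<And>k. real k \<le> real_of_int \<bar>h k\<bar> + C" and C: "C \<ge> 0"
  shows "summable (\<lambda>k. norm (a (h k)))" "(\<lambda>k. a (h k)) \<longlonglongrightarrow> 0"
proof -
  have T2: "(\<lambda>k. real_of_int \<bar>h k\<bar> ^ 2 * norm (a (h k))) \<longlonglongrightarrow> 0"
    using filterlim_compose[OF t2 hF] .
  have T0: "(\<lambda>k. norm (a (h k))) \<longlonglongrightarrow> 0"
    using filterlim_compose[OF t0 hF] by simp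
  then show "(\<lambda>k. a (h k)) \<longlonglongrightarrow> 0" using tendsto_norm_zero_iff by blast
  have U: "(\<lambda>k. 2 * (real_of_int \<bar>h k\<bar> ^ 2 * norm (a (h k))) + 2 * C^2 * norm (a (h k))) \<longlonglongrightarrow> 0"
    using tendsto_add[OF tendsto_mult_right_zero[OF T2, of 2] tendsto_mult_right_zero[OF T0, of "2*C^2"]]
    by (simp add: mult.commute)
  have le: "real k ^ 2 * norm (a (h k)) \<le> 2 * (real_of_int \<bar>h k\<bar> ^ 2 * norm (a (h k))) + 2 * C^2 * norm (a (h k))" for k
  proof -
    have "real k ^ 2 \<le> (real_of_int \<bar>h k\<bar> + C)^2"
      using hb[of k] by (intro power_mono) auto
    also have "\<dots> \<le> 2 * real_of_int \<bar>h k\<bar> ^ 2 + 2 * C^2"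
      using zero_le_square[of "real_of_int \<bar>h k\<bar> - C"] by (simp add: power2_eq_square algebra_simps)
    finally have "real k ^ 2 * norm (a (h k)) \<le> (2 * real_of_int \<bar>h k\<bar> ^ 2 + 2 * C^2) * norm (a (h k))"
      by (rule mult_right_mono) simp
    then show ?thesis by (simp add: algebra_simps)
  qed
  have K: "(\<lambda>k. real k ^ 2 * norm (a (h k))) \<longlonglongrightarrow> 0"
    by (rule tendsto_sandwich[OF _ _ tendsto_const U]; (rule always_eventually, rule allI, rule le)?) simp
  have ev: "eventually (\<lambda>k. real k ^ 2 * norm (a (h k)) < 1) sequentially"
    using order_tendstoD(2)[OF K] by simp
  have ev2: "eventually (\<lambda>k. norm (norm (a (h k))) \<le> inverse (real k ^ 2)) sequentially"
    using ev eventually_gt_at_top[of "0::nat"]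
  proof eventually_elim
    case (elim k)
    then show ?case by (simp add: field_simps)
  qed
  show "summable (\<lambda>k. norm (a (h k)))"
    by (rule summable_comparison_test_ev[OF ev2 inverse_power_summable]) simp
qed

lemma decay_left:
  assumes "rapid_decay a"
  shows "summable (\<lambda>k. norm (a (c - int k)))" "(\<lambda>k. a (c - int k)) \<longlonglongrightarrow> 0"
proof -
  have hF: "filterlim (\<lambda>k. c - int k) at_bot sequentially"
    unfolding filterlim_at_bot
  proof
    fix Z
    show "eventually (\<lambda>k. c - int k \<le> Z) sequentially"
      using eventually_ge_at_top[of "nat (c - Z)"] by eventually_elim auto
  qed
  have hb: "real k \<le> real_of_int \<bar>c - int k\<bar> + \<bar>real_of_int c\<bar>" for k by linarith
  from assms have t2: "((\<lambda>n. real_of_int \<bar>n\<bar> ^ 2 * norm (a n)) \<longlongrightarrow> 0) at_bot"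
    and t0: "((\<lambda>n. real_of_int \<bar>n\<bar> ^ 0 * norm (a n)) \<longlongrightarrow> 0) at_bot"
    unfolding rapid_decay_def by blast+
  show "summable (\<lambda>k. norm (a (c - int k)))" "(\<lambda>k. a (c - int k)) \<longlonglongrightarrow> 0"
    using decay_gen[OF t2 t0 hF hb] by auto
qed

lemma decay_right:
  assumes "rapid_decay a"
  shows "summable (\<lambda>k. norm (a (c + int k)))" "(\<lambda>k. a (c + int k)) \<longlonglongrightarrow> 0"
proof -
  have hF: "filterlim (\<lambda>k. c + int k) at_top sequentially"
    unfolding filterlim_at_top
  proof
    fix Z
    show "eventually (\<lambda>k. Z \<le> c + int k) sequentially"
      using eventually_ge_at_top[of "nat (Z - c)"] by eventually_elim auto
  qed
  have hb: "real k \<le> real_of_int \<bar>c + int k\<bar> + \<bar>real_of_int c\<bar>" for k by linarith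
  from assms have t2: "((\<lambda>n. real_of_int \<bar>n\<bar> ^ 2 * norm (a n)) \<longlongrightarrow> 0) at_top"
    and t0: "((\<lambda>n. real_of_int \<bar>n\<bar> ^ 0 * norm (a n)) \<longlongrightarrow> 0) at_top"
    unfolding rapid_decay_def by blast+
  show "summable (\<lambda>k. norm (a (c + int k)))" "(\<lambda>k. a (c + int k)) \<longlonglongrightarrow> 0"
    using decay_gen[OF t2 t0 hF hb] by auto
qed

lemma conv_prod_of:
  fixes x y :: "nat \<Rightarrow> complex"
  assumes "summable (\<lambda>k. norm (x k))" "y \<longlonglongrightarrow> 0" and that: "norm s = 1"
  shows "convergent_prod (\<lambda>k. 1 + s * x k * y k)"
proof -
  have "eventually (\<lambda>k. norm (y k) < 1) sequentially"
    using order_tendstoD(2)[OF tendsto_norm_zero[OF assms(2)], of 1] by simp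
  then have "eventually (\<lambda>k. norm (norm (1 + s * x k * y k - 1)) \<le> norm (x k)) sequentially"
    by eventually_elim (simp add: norm_mult that mult_left_le)
  then have "summable (\<lambda>k. norm (1 + s * x k * y k - 1))"
    by (rule summable_comparison_test_ev[OF _ assms(1)])
  then show ?thesis
    by (intro abs_convergent_prod_imp_convergent_prod summable_imp_abs_convergent_prod)
qed

lemma lprod_props:
  fixes F :: "int \<Rightarrow> complex"
  assumes conv: "\<And>c. convergent_prod (\<lambda>k. F (c - int k))" and nz: "\<And>j. F j \<noteq> 0"
  shows "(\<lambda>k. F (n - int k)) has_prod lprod F n" "lprod F n \<noteq> 0"
    "lprod F n = F n * lprod F (n - 1)"
proof -
  show H: "(\<lambda>k. F (c - int k)) has_prod lprod F c" for c
    unfolding lprod_def using convergent_prod_has_prod[OF conv] .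
  show "lprod F n \<noteq> 0" unfolding lprod_def by (rule prodinf_nonzero[OF conv nz])
  have "(\<lambda>k. F (n - int (Suc k))) has_prod lprod F (n - 1)"
    using H[of "n - 1"] by (simp add: algebra_simps)
  then have "(\<lambda>k. F (n - int k)) has_prod (lprod F (n - 1) * F (n - int 0))"
    using has_prod_Suc_iff[of "\<lambda>k. F (n - int k)"] nz by simp
  then show "lprod F n = F n * lprod F (n - 1)"
    using has_prod_unique2[OF H[of n]] by (simp add: mult.commute)
qed

lemma split1: "(\<Prod>j\<in>{- int m..int m}. F j) = (\<Prod>k<Suc m. F (- int k)) * (\<Prod>k<m. F (1 + int k))"
proof (induction m)
  case 0
  then show ?case by simp
next
  case (Suc m)
  have e: "{- int (Suc m)..int (Suc m)} = insert (- int m - 1) (insert (int m + 1) {- int m..int m})"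
    by auto
  have x: "- int m - 1 = - 1 - int m" by simp
  show ?case unfolding e using Suc by (simp add: algebra_simps x)
qed

lemma split2: "(\<Prod>j\<in>{- int m..int m}. F (j + 1)) = (\<Prod>k<m. F (- int k)) * (\<Prod>k<Suc m. F (1 + int k))"
proof (induction m)
  case 0
  then show ?case by simp
next
  case (Suc m)
  have e: "{- int (Suc m)..int (Suc m)} = insert (- int m - 1) (insert (int m + 1) {- int m..int m})"
    by auto
  have x: "- int m - 1 = - 1 - int m" by simp
  show ?case unfolding e using Suc by (simp add: algebra_simps x)
qed

lemma zprod_props:
  fixes F :: "int \<Rightarrow> complex"
  assumes convL: "convergent_prod (\<lambda>k. F (- int k))" and convR: "convergent_prod (\<lambda>k. F (1 + int k))"
    and nz: "\<And>j. F j \<noteq> 0"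
  defines "L \<equiv> prodinf (\<lambda>k. F (- int k)) * prodinf (\<lambda>k. F (1 + int k))"
  shows "(\<lambda>m. \<Prod>j\<in>{- int m..int m}. F j) \<longlonglongrightarrow> L"
    "(\<lambda>m. \<Prod>j\<in>{- int m..int m}. F (j + 1)) \<longlonglongrightarrow> L" "L \<noteq> 0" "zprod F = L"
proof -
  have A: "(\<lambda>n. \<Prod>k<n. F (- int k)) \<longlonglongrightarrow> prodinf (\<lambda>k. F (- int k))"
    using convergent_prod_LIMSEQ[OF convL] LIMSEQ_lessThan_iff_atMost by blast
  have B: "(\<lambda>n. \<Prod>k<n. F (1 + int k)) \<longlonglongrightarrow> prodinf (\<lambda>k. F (1 + int k))"
    using convergent_prod_LIMSEQ[OF convR] LIMSEQ_lessThan_iff_atMost by blast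
  show 1: "(\<lambda>m. \<Prod>j\<in>{- int m..int m}. F j) \<longlonglongrightarrow> L"
    unfolding split1 L_def by (intro tendsto_mult LIMSEQ_Suc A B)
  show "(\<lambda>m. \<Prod>j\<in>{- int m..int m}. F (j + 1)) \<longlonglongrightarrow> L"
    unfolding split2 L_def by (intro tendsto_mult LIMSEQ_Suc A B)
  show "L \<noteq> 0" unfolding L_def using prodinf_nonzero[OF convL] prodinf_nonzero[OF convR] nz by simp
  show "zprod F = L" unfolding zprod_def using 1 by (rule limI)
qed

lemma alg_uv:
  fixes a b c D E fn gn :: complex
  assumes "D \<noteq> 0" "E \<noteq> 0" "fn \<noteq> 0" "gn \<noteq> 0" "fn = 1 - a * b" "gn = 1 + a * c"
  shows "1 - a * E / (fn * D) * ((- b + c - a * b * c) * D / (gn * E)) = 1 / (fn * gn)"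
proof -
  have "a * E / (fn * D) * ((- b + c - a * b * c) * D / (gn * E)) = (a * (- b + c - a * b * c)) / (fn * gn)"
    using assms(1-4) by (simp add: field_simps)
  also have "a * (- b + c - a * b * c) = fn * gn - 1" by (simp add: assms(5,6) algebra_simps)
  finally show ?thesis using assms(3,4) by (simp add: field_simps)
qed

lemma alg_ps:
  fixes a a' c D E fn gn :: complex
  assumes "D \<noteq> 0" "E \<noteq> 0" "fn \<noteq> 0" "gn \<noteq> 0" "fn = 1 - a' * c" "gn = 1 + a * c"
  shows "1 - (a - a' - a * a' * c) * E / (fn * D) * (c * D / (gn * E)) = 1 / (fn * gn)"
proof -
  have "(a - a' - a * a' * c) * E / (fn * D) * (c * D / (gn * E)) = ((a - a' - a * a' * c) * c) / (fn * gn)"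
    using assms(1-4) by (simp add: field_simps)
  also have "(a - a' - a * a' * c) * c = fn * gn - 1" by (simp add: assms(5,6) algebra_simps)
  finally show ?thesis using assms(3,4) by (simp add: field_simps)
qed


theorem proposition3p1:
  fixes q r :: "int \<Rightarrow> complex"
  assumes "rapid_decay q" and "rapid_decay r"
    and "\<And>n. 1 - q n * r n \<noteq> 0"
    and "\<And>n. 1 + q n * r (n + 1) \<noteq> 0"
  defines "u \<equiv> useq q r" and "v \<equiv> vseq q r" and "p \<equiv> pseq q r" and "s \<equiv> sseq q r"
    and "D \<equiv> Dseq q r" and "E \<equiv> Eseq q r"
  shows "(\<forall>n. 1 - u n * v n = 1 / ((1 - q n * r n) * (1 + q n * r (n + 1)))) \<and>
         (\<forall>n. 1 - p n * s n = 1 / ((1 - q (n + 1) * r (n + 1)) * (1 + q n * r (n + 1)))) \<and>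
         (\<forall>n. (\<lambda>k. 1 - u (n - int k) * v (n - int k)) has_prod (1 / (D n * E n))) \<and>
         ((\<lambda>m. \<Prod>j\<in>{- int m..int m}. 1 - u j * v j) \<longlonglongrightarrow> 1 / (Dinf q r * Einf q r)) \<and>
         (\<forall>n. (\<lambda>k. 1 - p (n - int k) * s (n - int k)) has_prod (1 / (D (n + 1) * E n))) \<and>
         ((\<lambda>m. \<Prod>j\<in>{- int m..int m}. 1 - p j * s j) \<longlonglongrightarrow> 1 / (Dinf q r * Einf q r))"
proof -
  define f where "f = (\<lambda>j. 1 - q j * r j)"
  define g where "g = (\<lambda>j. 1 + q j * r (j + 1))"
  have fnz: "f j \<noteq> 0" for j using assms(3) by (simp add: f_def)
  have gnz: "g j \<noteq> 0" for j using assms(4) by (simp add: g_def)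
  have fL: "convergent_prod (\<lambda>k. f (c - int k))" for c
  proof -
    have "convergent_prod (\<lambda>k. 1 + (-1) * q (c - int k) * r (c - int k))"
      by (rule conv_prod_of[OF decay_left(1)[OF assms(1)] decay_left(2)[OF assms(2)]]) simp
    then show ?thesis by (simp add: f_def)
  qed
  have gL: "convergent_prod (\<lambda>k. g (c - int k))" for c
  proof -
    have "convergent_prod (\<lambda>k. 1 + 1 * q (c - int k) * r (c + 1 - int k))"
      by (rule conv_prod_of[OF decay_left(1)[OF assms(1)] decay_left(2)[OF assms(2)]]) simp
    moreover have x: "c - int k + 1 = c + 1 - int k" for k by simp
    ultimately show ?thesis by (simp add: g_def x)
  qed
  have fR: "convergent_prod (\<lambda>k. f (1 + int k))"
  proof -
    have "convergent_prod (\<lambda>k. 1 + (-1) * q (1 + int k) * r (1 + int k))"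
      by (rule conv_prod_of[OF decay_right(1)[OF assms(1)] decay_right(2)[OF assms(2)]]) simp
    then show ?thesis by (simp add: f_def)
  qed
  have gR: "convergent_prod (\<lambda>k. g (1 + int k))"
  proof -
    have "convergent_prod (\<lambda>k. 1 + 1 * q (1 + int k) * r (2 + int k))"
      by (rule conv_prod_of[OF decay_right(1)[OF assms(1)] decay_right(2)[OF assms(2)]]) simp
    moreover have x: "1 + int k + 1 = 2 + int k" for k by simp
    ultimately show ?thesis by (simp add: g_def x)
  qed
  have fL0: "convergent_prod (\<lambda>k. f (- int k))" using fL[of 0] by simp
  have gL0: "convergent_prod (\<lambda>k. g (- int k))" using gL[of 0] by simp
  have DD: "D = lprod f" by (simp add: D_def Dseq_def f_def)
  have EE: "E = lprod g" by (simp add: E_def Eseq_def g_def)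
  have DI: "Dinf q r = zprod f" by (simp add: Dinf_def f_def)
  have EI: "Einf q r = zprod g" by (simp add: Einf_def g_def)
  note Dp = lprod_props[OF fL fnz] and Ep = lprod_props[OF gL gnz]
  note Zf = zprod_props[OF fL0 fR fnz] and Zg = zprod_props[OF gL0 gR gnz]
  have uv: "1 - u n * v n = 1 / (f n * g n)" for n
  proof -
    have "1 - u n * v n = 1 - q n * E (n - 1) / (f n * D (n - 1)) *
       ((- r n + r (n + 1) - q n * r n * r (n + 1)) * D (n - 1) / (g n * E (n - 1)))"
      unfolding u_def v_def useq_def vseq_def D_def[symmetric] E_def[symmetric]
      using Dp(3)[of n] Ep(3)[of n] DD EE by simp
    also have "\<dots> = 1 / (f n * g n)"
      by (rule alg_uv) (use Dp(2) Ep(2) fnz gnz DD EE in \<open>auto simp: f_def g_def\<close>)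
    finally show ?thesis .
  qed
  have ps: "1 - p n * s n = 1 / (f (n + 1) * g n)" for n
  proof -
    have "1 - p n * s n = 1 - (q n - q (n + 1) - q n * q (n + 1) * r (n + 1)) * E (n - 1) / (f (n + 1) * D n) *
       (r (n + 1) * D n / (g n * E (n - 1)))"
      unfolding p_def s_def pseq_def sseq_def D_def[symmetric] E_def[symmetric]
      using Dp(3)[of "n + 1"] Ep(3)[of n] DD EE by simp
    also have "\<dots> = 1 / (f (n + 1) * g n)"
      by (rule alg_ps) (use Dp(2) Ep(2) fnz gnz DD EE in \<open>auto simp: f_def g_def\<close>)
    finally show ?thesis .
  qed
  have P1: "\<forall>n. 1 - u n * v n = 1 / ((1 - q n * r n) * (1 + q n * r (n + 1)))"
    using uv by (simp add: f_def g_def)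
  have P2: "\<forall>n. 1 - p n * s n = 1 / ((1 - q (n + 1) * r (n + 1)) * (1 + q n * r (n + 1)))"
    using ps by (simp add: f_def g_def)
  have P3: "(\<lambda>k. 1 - u (n - int k) * v (n - int k)) has_prod (1 / (D n * E n))" for n
  proof -
    have "(\<lambda>k. inverse (f (n - int k) * g (n - int k))) has_prod inverse (D n * E n)"
      using has_prod_inverse[OF has_prod_mult[OF Dp(1)[of n] Ep(1)[of n]]] DD EE by simp
    then show ?thesis using uv by (simp add: inverse_eq_divide)
  qed
  have P5: "(\<lambda>k. 1 - p (n - int k) * s (n - int k)) has_prod (1 / (D (n + 1) * E n))" for n
  proof -
    have "(\<lambda>k. inverse (f (n + 1 - int k) * g (n - int k))) has_prod inverse (D (n + 1) * E n)"
      using has_prod_inverse[OF has_prod_mult[OF Dp(1)[of "n + 1"] Ep(1)[of n]]] DD EE by simp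
    moreover have x: "n - int k + 1 = n + 1 - int k" for k by simp
    ultimately show ?thesis using ps by (simp add: inverse_eq_divide x)
  qed
  have P4: "(\<lambda>m. \<Prod>j\<in>{- int m..int m}. 1 - u j * v j) \<longlonglongrightarrow> 1 / (Dinf q r * Einf q r)"
  proof -
    have "(\<lambda>m. inverse ((\<Prod>j\<in>{- int m..int m}. f j) * (\<Prod>j\<in>{- int m..int m}. g j)))
        \<longlonglongrightarrow> inverse (zprod f * zprod g)"
      using Zf(1,3,4) Zg(1,3,4) by (intro tendsto_inverse tendsto_mult) auto
    moreover have "inverse ((\<Prod>j\<in>{- int m..int m}. f j) * (\<Prod>j\<in>{- int m..int m}. g j))
        = (\<Prod>j\<in>{- int m..int m}. 1 - u j * v j)" for m
      by (simp add: uv prod.distrib [symmetric] prod_dividef inverse_eq_divide)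
    ultimately show ?thesis by (simp add: DI EI inverse_eq_divide)
  qed
  have P6: "(\<lambda>m. \<Prod>j\<in>{- int m..int m}. 1 - p j * s j) \<longlonglongrightarrow> 1 / (Dinf q r * Einf q r)"
  proof -
    have "(\<lambda>m. inverse ((\<Prod>j\<in>{- int m..int m}. f (j + 1)) * (\<Prod>j\<in>{- int m..int m}. g j)))
        \<longlonglongrightarrow> inverse (zprod f * zprod g)"
      using Zf(2,3,4) Zg(1,3,4) by (intro tendsto_inverse tendsto_mult) auto
    moreover have "inverse ((\<Prod>j\<in>{- int m..int m}. f (j + 1)) * (\<Prod>j\<in>{- int m..int m}. g j))
        = (\<Prod>j\<in>{- int m..int m}. 1 - p j * s j)" for m
      by (simp add: ps prod.distrib [symmetric] prod_dividef inverse_eq_divide)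
    ultimately show ?thesis by (simp add: DI EI inverse_eq_divide)
  qed
  show ?thesis using P1 P2 P3 P4 P5 P6 by blast
qed

end
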